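(* Let $a<b$ and let $f:[a,b]\rightarrow\mathbb{R}$ be a differentiable mapping in $(a,b)$ such that $f'\in L^1[a,b]$ and $\gamma\le f'(x)\le \Gamma$ for all $x\in [a,b]$, where $\gamma,\Gamma$ are real constants. Put $S=\frac{f(b)-f(a)}{b-a}$. Then for all $x\in[a,\frac{a+b}{2}]$, \[ \left|\frac{f(x)+f(a+b-x)}{2}-\frac{1}{b-a}\int_{a}^{b}f(t)\,dt\right|\leq \left[\frac{b-a}{4}+\left|x-\frac{3a+b}{4}\right|\right] (S-\gamma) \] and \[ \left|\frac{f(x)+f(a+b-x)}{2}-\frac{1}{b-a}\int_{a}^{b}f(t)\,dt\right|\leq \left[\frac{b-a}{4}+\left|x-\frac{3a+b}{4}\right|\right] (\Gamma-S). \] Moreover, if $\gamma=\inf_{t\in [a,b]}f'(t)$ and $\Gamma=\sup_{t\in [a,b]}f'(t)$, then the constant $\frac14$ (the coefficient of $b-a$ in the bracket) in each of these two inequalities is sharp, in the sense that it cannot be replaced by a smaller constant. *)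

theory Defs
  imports "HOL-Analysis.Analysis"
begin

text \<open>Standing hypotheses of Theorem 2.1: a < b, f continuous on [a,b] (implicit in the paper),
 differentiable in (a,b) with derivative f', f' in L^1[a,b], and gamma <= f' <= Gamma on [a,b].\<close>
definition thm21_hyps :: "real \<Rightarrow> real \<Rightarrow> (real \<Rightarrow> real) \<Rightarrow> (real \<Rightarrow> real) \<Rightarrow> real \<Rightarrow> real \<Rightarrow> bool" where
  "thm21_hyps a b f f' \<gamma> \<Gamma> \<longleftrightarrow>
     a < b \<and> continuous_on {a..b} f \<and>
     (\<forall>x\<in>{a<..<b}. (f has_real_derivative f' x) (at x)) \<and>
     set_integrable lborel {a..b} f' \<and>
     (\<forall>x\<in>{a..b}. \<gamma> \<le> f' x \<and> f' x \<le> \<Gamma>)"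

definition thm21_lhs :: "real \<Rightarrow> real \<Rightarrow> (real \<Rightarrow> real) \<Rightarrow> real \<Rightarrow> real" where
  "thm21_lhs a b f x = \<bar>(f x + f (a + b - x)) / 2 - (1 / (b - a)) * integral {a..b} f\<bar>"

definition slope :: "real \<Rightarrow> real \<Rightarrow> (real \<Rightarrow> real) \<Rightarrow> real" where
  "slope a b f = (f b - f a) / (b - a)"

end

theory Submission imports Defs begin

lemma mono_from_deriv:
  fixes g g' :: "real \<Rightarrow> real"
  assumes cont: "continuous_on {a..b} g"
    and der: "\<And>t. a < t \<Longrightarrow> t < b \<Longrightarrow> (g has_real_derivative g' t) (at t)"
    and nn: "\<And>t. a < t \<Longrightarrow> t < b \<Longrightarrow> g' t \<ge> 0"
    and uv: "a \<le> u" "u \<le> v" "v \<le> b"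
  shows "g u \<le> g v"
proof (cases "u = v")
  case True then show ?thesis by simp
next
  case False
  then have lt: "u < v" using uv by simp
  have c: "continuous_on {u..v} g" by (rule continuous_on_subset[OF cont]) (use uv in auto)
  have "\<And>x. u < x \<Longrightarrow> x < v \<Longrightarrow> g differentiable (at x)"
    using der uv by (meson less_le_trans le_less_trans real_differentiable_def)
  from MVT[OF lt c this] obtain l z where z: "u < z" "z < v" "DERIV g z :> l" "g v - g u = (v - u) * l"
    by blast
  have "l = g' z" using DERIV_unique[OF z(3) der] z uv by auto
  then have "l \<ge> 0" using nn z uv by auto
  then show ?thesis using z(4) lt by (simp add: algebra_simps) (metis diff_ge_0_iff_ge lt less_eq_real_def mult_nonneg_nonneg z(4))
qed

lemma int_bounds:
  fixes g :: "real \<Rightarrow> real"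
  assumes cont: "continuous_on {c..d} g" and mono: "\<And>s t. c \<le> s \<Longrightarrow> s \<le> t \<Longrightarrow> t \<le> d \<Longrightarrow> g s \<le> g t"
    and cd: "c \<le> d"
  shows "g c * (d - c) \<le> integral {c..d} g \<and> integral {c..d} g \<le> g d * (d - c)"
proof -
  have i: "g integrable_on {c..d}" using cont integrable_continuous_real by blast
  have "integral {c..d} (\<lambda>t. g c) \<le> integral {c..d} g"
    by (rule integral_le) (use i mono in auto)
  moreover have "integral {c..d} g \<le> integral {c..d} (\<lambda>t. g d)"
    by (rule integral_le) (use i mono in auto)
  ultimately show ?thesis using cd by (simp add: mult.commute)
qed

lemma core:
  fixes u w p q r s I :: real
  assumes "u \<ge> 0" "w \<ge> 0" "p \<le> q" "q \<le> r" "r \<le> s"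
    and "p*u + q*w + r*u \<le> I" "I \<le> q*u + r*w + s*u"
  shows "\<bar>(q+r)*(2*u+w)/2 - I\<bar> \<le> ((2*u+w)/4 + \<bar>u - (2*u+w)/4\<bar>) * (s-p)"
proof -
  have eq: "(q+r)*(2*u+w)/2 = q*u + r*u + q*w/2 + r*w/2" by (simp add: algebra_simps)
  show ?thesis
  proof (cases "2*u \<ge> w")
    case True
    have e: "((2*u+w)/4 + \<bar>u - (2*u+w)/4\<bar>) * (s-p) = s*u - p*u" using True by (simp add: abs_if algebra_simps) 
    have g1: "(r-q)*w \<le> (r-q)*(2*u)" using True assms by (intro mult_left_mono) auto
    have h1: "r*w - q*w \<le> 2*(r*u) - 2*(q*u)" using g1 by (simp add: algebra_simps)
    have g2: "r*u \<le> s*u" "p*u \<le> q*u" using assms by (auto intro: mult_right_mono)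
    show ?thesis unfolding e eq abs_le_iff using assms h1 g2 by linarith
  next
    case False
    have e: "((2*u+w)/4 + \<bar>u - (2*u+w)/4\<bar>) * (s-p) = s*w/2 - p*w/2" using False by (simp add: abs_if field_simps) 
    have g1: "(q-p)*(2*u) \<le> (q-p)*w" "(s-r)*(2*u) \<le> (s-r)*w" using False assms by (auto intro!: mult_left_mono)
    have h1: "2*(q*u) - 2*(p*u) \<le> q*w - p*w" "2*(s*u) - 2*(r*u) \<le> s*w - r*w" using g1 by (simp_all add: algebra_simps)
    have g2: "q*w \<le> r*w" "r*w \<le> s*w" "p*w \<le> q*w" using assms by (auto intro: mult_right_mono)
    show ?thesis unfolding e eq abs_le_iff using assms h1 g2 by linarith
  qed
qed

lemma int_lin: fixes a b c :: real assumes "a \<le> b"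
  shows "((\<lambda>t. c*t) has_integral c*(b^2-a^2)/2) {a..b}"
proof -
  have "((\<lambda>t. c*t) has_integral (c*b^2/2 - c*a^2/2)) {a..b}"
    by (rule fundamental_theorem_of_calculus[OF assms])
       (auto intro!: derivative_eq_intros simp: has_real_derivative_iff_has_vector_derivative[symmetric] power2_eq_square)
  moreover have "c*b^2/2 - c*a^2/2 = c*(b^2-a^2)/2" by (simp add: field_simps)
  ultimately show ?thesis by simp
qed

lemma mono_bound:
  fixes g :: "real \<Rightarrow> real"
  assumes ab: "a < b" and cont: "continuous_on {a..b} g"
    and mono: "\<And>s t. a \<le> s \<Longrightarrow> s \<le> t \<Longrightarrow> t \<le> b \<Longrightarrow> g s \<le> g t"
    and x: "x \<in> {a..(a+b)/2}"
  shows "thm21_lhs a b g x \<le> ((b-a)/4 + \<bar>x-(3*a+b)/4\<bar>) * slope a b g"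
proof -
  define y where "y = a + b - x"
  have xy: "a \<le> x" "x \<le> y" "y \<le> b" using x by (auto simp: y_def)
  have i: "g integrable_on {a..b}" using cont integrable_continuous_real by blast
  have ix: "g integrable_on {x..b}" by (rule integrable_subinterval_real[OF i]) (use xy in auto)
  have c1: "integral {a..x} g + integral {x..b} g = integral {a..b} g"
    using Henstock_Kurzweil_Integration.integral_combine[OF xy(1) _ i] xy by auto
  have c2: "integral {x..y} g + integral {y..b} g = integral {x..b} g"
    using Henstock_Kurzweil_Integration.integral_combine[OF xy(2) xy(3) ix] .
  have cs: "continuous_on {c..d} g" if "a \<le> c" "d \<le> b" for c d
    by (rule continuous_on_subset[OF cont]) (use that in auto)
  have b1: "g a * (x - a) \<le> integral {a..x} g \<and> integral {a..x} g \<le> g x * (x - a)"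
    by (rule int_bounds) (use cs mono xy in auto)
  have b2: "g x * (y - x) \<le> integral {x..y} g \<and> integral {x..y} g \<le> g y * (y - x)"
    by (rule int_bounds) (use cs mono xy in auto)
  have b3: "g y * (b - y) \<le> integral {y..b} g \<and> integral {y..b} g \<le> g b * (b - y)"
    by (rule int_bounds) (use cs mono xy in auto)
  have byx: "b - y = x - a" by (simp add: y_def)
  have m: "g a \<le> g x" "g x \<le> g y" "g y \<le> g b" using mono xy by auto
  define I where "I = integral {a..b} g"
  have Ib: "g a*(x-a) + g x*(y-x) + g y*(x-a) \<le> I" "I \<le> g x*(x-a) + g y*(y-x) + g b*(x-a)"
    using b1 b2 b3 c1 c2 byx unfolding I_def by (auto simp: mult.commute)
  have K: "\<bar>(g x + g y)*(2*(x-a)+(y-x))/2 - I\<bar> \<le> ((2*(x-a)+(y-x))/4 + \<bar>(x-a) - (2*(x-a)+(y-x))/4\<bar>) * (g b - g a)"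
    by (rule core) (use xy m Ib in auto)
  have hh: "2*(x-a)+(y-x) = b - a" by (simp add: y_def)
  have hh2: "(x-a) - (b-a)/4 = x - (3*a+b)/4" by (simp add: field_simps)
  have K2: "\<bar>(g x + g y)*(b-a)/2 - I\<bar> \<le> ((b-a)/4 + \<bar>x - (3*a+b)/4\<bar>) * (g b - g a)"
    using K unfolding hh hh2 .
  have "thm21_lhs a b g x = \<bar>(g x + g y)*(b-a)/2 - I\<bar> / (b-a)"
  proof -
    have "(g x + g y)/2 - (1/(b-a))*I = ((g x + g y)*(b-a)/2 - I)/(b-a)" using ab by (simp add: field_simps)
    then show ?thesis unfolding thm21_lhs_def I_def[symmetric] y_def[symmetric] using ab by simp
  qed
  also have "\<dots> \<le> ((b-a)/4 + \<bar>x - (3*a+b)/4\<bar>) * (g b - g a) / (b-a)"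
    using K2 ab by (simp add: divide_right_mono)
  finally show ?thesis unfolding slope_def by simp
qed


lemma int_pow: "integral {0..1::real} (\<lambda>t. t^N) = 1/(real N + 1)"
proof -
  have "((\<lambda>t. t^N) has_integral (1^(N+1)/(real N+1) - 0^(N+1)/(real N+1))) {0..1::real}"
  proof (rule fundamental_theorem_of_calculus)
    fix t :: real
    have "((\<lambda>t. t^(N+1)/(real N+1)) has_real_derivative t^N) (at t within {0..1})"
    proof -
      have e: "real (Suc N) * t ^ N / (real N + 1) = t^N"
        by (metis add.commute nonzero_mult_div_cancel_left of_nat_Suc of_nat_neq_0 times_divide_eq_left)
      show ?thesis by (intro derivative_eq_intros) (auto simp del: of_nat_Suc simp: e)
    qed
    then show "((\<lambda>t. t^(N+1)/(real N+1)) has_vector_derivative t^N) (at t within {0..1})"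
      by (simp add: has_real_derivative_iff_has_vector_derivative)
  qed simp
  then show ?thesis by (simp add: integral_unique)
qed

lemma part1:
  assumes h: "thm21_hyps a b f f' \<gamma> \<Gamma>" and x: "x \<in> {a..(a + b) / 2}"
  shows "thm21_lhs a b f x \<le> ((b - a) / 4 + \<bar>x - (3 * a + b) / 4\<bar>) * (slope a b f - \<gamma>) \<and>
         thm21_lhs a b f x \<le> ((b - a) / 4 + \<bar>x - (3 * a + b) / 4\<bar>) * (\<Gamma> - slope a b f)"
proof -
  have ab: "a < b" and cf: "continuous_on {a..b} f"
    and der: "\<And>t. t \<in> {a<..<b} \<Longrightarrow> (f has_real_derivative f' t) (at t)"
    and bd: "\<And>t. t \<in> {a..b} \<Longrightarrow> \<gamma> \<le> f' t \<and> f' t \<le> \<Gamma>"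
    using h unfolding thm21_hyps_def by auto
  have fi: "f integrable_on {a..b}" using cf integrable_continuous_real by blast
  have il: "((\<lambda>t. c*t) has_integral c*(b^2-a^2)/2) {a..b}" for c using int_lin ab by simp
  define y where "y = a + b - x"
  have key: "(b^2-a^2)/2/(b-a) = (x+y)/2" using ab by (simp add: y_def field_simps power2_eq_square)
  define g where "g t = f t - \<gamma>*t" for t
  have cg: "continuous_on {a..b} g" unfolding g_def by (intro continuous_intros cf)
  have mg: "g s \<le> g t" if "a \<le> s" "s \<le> t" "t \<le> b" for s t
  proof (rule mono_from_deriv[OF cg _ _ that])
    fix t assume "a < t" "t < b"
    then show "(g has_real_derivative (f' t - \<gamma>)) (at t)"
      unfolding g_def by (auto intro!: derivative_eq_intros der)
    show "f' t - \<gamma> \<ge> 0" using bd \<open>a < t\<close> \<open>t < b\<close> by force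
  qed
  have Ig: "integral {a..b} g = integral {a..b} f - \<gamma>*(b^2-a^2)/2"
    unfolding g_def using integral_diff[OF fi has_integral_integrable[OF il[of \<gamma>]]] integral_unique[OF il[of \<gamma>]]
    by (simp only:)
  have "thm21_lhs a b g x = thm21_lhs a b f x"
  proof -
    have "(g x + g y)/2 - (1/(b-a)) * integral {a..b} g = (f x + f y)/2 - (1/(b-a)) * integral {a..b} f"
      unfolding Ig g_def using key ab by (simp add: field_simps) (simp add: algebra_simps power2_eq_square y_def)
    then show ?thesis unfolding thm21_lhs_def y_def by simp
  qed
  moreover have "slope a b g = slope a b f - \<gamma>" unfolding slope_def g_def using ab by (simp add: field_simps)
  ultimately have P1: "thm21_lhs a b f x \<le> ((b - a) / 4 + \<bar>x - (3 * a + b) / 4\<bar>) * (slope a b f - \<gamma>)"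
    using mono_bound[OF ab cg mg x] by simp
  define k where "k t = \<Gamma>*t - f t" for t
  have ck: "continuous_on {a..b} k" unfolding k_def by (intro continuous_intros cf)
  have mk: "k s \<le> k t" if "a \<le> s" "s \<le> t" "t \<le> b" for s t
  proof (rule mono_from_deriv[OF ck _ _ that])
    fix t assume "a < t" "t < b"
    then show "(k has_real_derivative (\<Gamma> - f' t)) (at t)"
      unfolding k_def by (auto intro!: derivative_eq_intros der)
    show "\<Gamma> - f' t \<ge> 0" using bd \<open>a < t\<close> \<open>t < b\<close> by force
  qed
  have Ik: "integral {a..b} k = \<Gamma>*(b^2-a^2)/2 - integral {a..b} f"
    unfolding k_def using integral_diff[OF has_integral_integrable[OF il[of \<Gamma>]] fi] integral_unique[OF il[of \<Gamma>]]
    by (simp only:)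
  have "thm21_lhs a b k x = thm21_lhs a b f x"
  proof -
    have "(k x + k y)/2 - (1/(b-a)) * integral {a..b} k = -((f x + f y)/2 - (1/(b-a)) * integral {a..b} f)"
      unfolding Ik k_def using key ab by (simp add: field_simps) (simp add: algebra_simps power2_eq_square y_def)
    then show ?thesis unfolding thm21_lhs_def y_def by simp
  qed
  moreover have "slope a b k = \<Gamma> - slope a b f" unfolding slope_def k_def using ab by (simp add: field_simps)
  ultimately have P2: "thm21_lhs a b f x \<le> ((b - a) / 4 + \<bar>x - (3 * a + b) / 4\<bar>) * (\<Gamma> - slope a b f)"
    using mono_bound[OF ab ck mk x] by simp
  show ?thesis using P1 P2 by simp
qed


lemma pow_hyps:
  fixes N :: nat assumes N: "N \<ge> 2"
  shows "thm21_hyps 0 1 (\<lambda>t. t^N) (\<lambda>t. real N * t^(N-1)) (Inf ((\<lambda>t. real N * t^(N-1)) ` {0..1})) (Sup ((\<lambda>t. real N * t^(N-1)) ` {0..1}))"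
    and "Inf ((\<lambda>t. real N * t^(N-1)) ` {0..1::real}) = 0"
proof -
  let ?S = "(\<lambda>t. real N * t^(N-1)) ` {0..1::real}"
  have bda: "bdd_above ?S"
    by (rule bdd_aboveI[where M="real N"]) (auto intro!: mult_left_le power_le_one)
  have bdb: "bdd_below ?S"
    by (rule bdd_belowI[where m=0]) auto
  show I: "Inf ?S = 0"
  proof (rule cInf_eq_minimum)
    show "0 \<in> ?S" using N by (auto intro!: image_eqI[where x=0])
  qed auto
  show "thm21_hyps 0 1 (\<lambda>t. t^N) (\<lambda>t. real N * t^(N-1)) (Inf ?S) (Sup ?S)"
    unfolding thm21_hyps_def
  proof (intro conjI ballI)
    show "continuous_on {0..1} (\<lambda>t::real. t^N)" by (intro continuous_intros)
    show "set_integrable lborel {0..1} (\<lambda>t::real. real N * t^(N-1))"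
      by (intro borel_integrable_atLeastAtMost' continuous_intros)
    fix x :: real
    show "((\<lambda>t. t^N) has_real_derivative real N * x^(N-1)) (at x)"
      using DERIV_pow[of N x] by simp
  next
    fix x :: real assume "x \<in> {0..1}"
    then show "Inf ?S \<le> real N * x^(N-1)" using bdb by (intro cInf_lower) auto
  next
    fix x :: real assume "x \<in> {0..1}"
    then show "real N * x^(N-1) \<le> Sup ?S" using bda by (intro cSup_upper) auto
  qed simp
qed

lemma npow_hyps:
  fixes N :: nat assumes N: "N \<ge> 2"
  shows "thm21_hyps 0 1 (\<lambda>t. -(t^N)) (\<lambda>t. -(real N * t^(N-1))) (Inf ((\<lambda>t. -(real N * t^(N-1))) ` {0..1})) (Sup ((\<lambda>t. -(real N * t^(N-1))) ` {0..1}))"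
    and "Sup ((\<lambda>t. -(real N * t^(N-1))) ` {0..1::real}) = 0"
proof -
  let ?S = "(\<lambda>t. -(real N * t^(N-1))) ` {0..1::real}"
  have bdb: "bdd_below ?S"
    by (rule bdd_belowI[where m="- real N"]) (auto intro!: mult_left_le power_le_one)
  have bda: "bdd_above ?S"
    by (rule bdd_aboveI[where M=0]) auto
  show I: "Sup ?S = 0"
  proof (rule cSup_eq_maximum)
    show "0 \<in> ?S" using N by (auto intro!: image_eqI[where x=0])
  qed auto
  show "thm21_hyps 0 1 (\<lambda>t. -(t^N)) (\<lambda>t. -(real N * t^(N-1))) (Inf ?S) (Sup ?S)"
    unfolding thm21_hyps_def
  proof (intro conjI ballI)
    show "continuous_on {0..1} (\<lambda>t::real. -(t^N))" by (intro continuous_intros)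
    show "set_integrable lborel {0..1} (\<lambda>t::real. -(real N * t^(N-1)))"
      by (intro borel_integrable_atLeastAtMost' continuous_intros)
    fix x :: real
    show "((\<lambda>t. -(t^N)) has_real_derivative -(real N * x^(N-1))) (at x)"
      using DERIV_pow[of N x] by (auto intro!: derivative_eq_intros)
  next
    fix x :: real assume "x \<in> {0..1}"
    then show "Inf ?S \<le> -(real N * x^(N-1))" using bdb by (intro cInf_lower) auto
  next
    fix x :: real assume "x \<in> {0..1}"
    then show "-(real N * x^(N-1)) \<le> Sup ?S" using bda by (intro cSup_upper) auto
  qed simp
qed

lemma pickN:
  fixes C :: real assumes "C < 1/4"
  obtains N :: nat where "N \<ge> 2" "1/(real N + 1) < 1/4 - C"
proof -
  obtain n :: nat where n: "1/(1/4 - C) < real n" using reals_Archimedean2 by blast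
  have pos: "1/4 - C > 0" using assms by simp
  have "1/(real (n+2) + 1) < 1/4 - C"
  proof -
    have "1/(1/4-C) < real (n+2) + 1" using n by simp
    then have "1 < (real (n+2) + 1) * (1/4 - C)" using pos by (simp add: field_simps)
    then show ?thesis by (simp add: field_simps)
  qed
  then show ?thesis using that[of "n+2"] by simp
qed

theorem theorem2p1:
  shows
   "(\<forall>a b f f' \<gamma> \<Gamma>. thm21_hyps a b f f' \<gamma> \<Gamma> \<longrightarrow>
       (\<forall>x\<in>{a..(a + b) / 2}.
          thm21_lhs a b f x \<le> ((b - a) / 4 + \<bar>x - (3 * a + b) / 4\<bar>) * (slope a b f - \<gamma>) \<and>
          thm21_lhs a b f x \<le> ((b - a) / 4 + \<bar>x - (3 * a + b) / 4\<bar>) * (\<Gamma> - slope a b f)))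
    \<and>
    (\<forall>C < 1 / 4. \<exists>a b f f' x.
       thm21_hyps a b f f' (Inf (f' ` {a..b})) (Sup (f' ` {a..b})) \<and>
       x \<in> {a..(a + b) / 2} \<and>
       thm21_lhs a b f x > (C * (b - a) + \<bar>x - (3 * a + b) / 4\<bar>) * (slope a b f - Inf (f' ` {a..b})))
    \<and>
    (\<forall>C < 1 / 4. \<exists>a b f f' x.
       thm21_hyps a b f f' (Inf (f' ` {a..b})) (Sup (f' ` {a..b})) \<and>
       x \<in> {a..(a + b) / 2} \<and>
       thm21_lhs a b f x > (C * (b - a) + \<bar>x - (3 * a + b) / 4\<bar>) * (Sup (f' ` {a..b}) - slope a b f))"
proof (intro conjI)
  show "\<forall>a b f f' \<gamma> \<Gamma>. thm21_hyps a b f f' \<gamma> \<Gamma> \<longrightarrow>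
       (\<forall>x\<in>{a..(a + b) / 2}.
          thm21_lhs a b f x \<le> ((b - a) / 4 + \<bar>x - (3 * a + b) / 4\<bar>) * (slope a b f - \<gamma>) \<and>
          thm21_lhs a b f x \<le> ((b - a) / 4 + \<bar>x - (3 * a + b) / 4\<bar>) * (\<Gamma> - slope a b f))"
    using part1 by blast
next
  show "\<forall>C < 1 / 4. \<exists>a b f f' x.
       thm21_hyps a b f f' (Inf (f' ` {a..b})) (Sup (f' ` {a..b})) \<and>
       x \<in> {a..(a + b) / 2} \<and>
       thm21_lhs a b f x > (C * (b - a) + \<bar>x - (3 * a + b) / 4\<bar>) * (slope a b f - Inf (f' ` {a..b}))"
  proof (intro allI impI)
    fix C :: real assume "C < 1/4"
    then obtain N :: nat where N: "N \<ge> 2" "1/(real N + 1) < 1/4 - C" by (rule pickN)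
    have l: "thm21_lhs 0 1 (\<lambda>t. t^N) 0 = 1/2 - 1/(real N + 1)"
      unfolding thm21_lhs_def int_pow using N by (simp add: field_simps zero_power)
    have s: "slope 0 1 (\<lambda>t::real. t^N) = 1" unfolding slope_def using N by simp
    show "\<exists>a b f f' x.
       thm21_hyps a b f f' (Inf (f' ` {a..b})) (Sup (f' ` {a..b})) \<and>
       x \<in> {a..(a + b) / 2} \<and>
       thm21_lhs a b f x > (C * (b - a) + \<bar>x - (3 * a + b) / 4\<bar>) * (slope a b f - Inf (f' ` {a..b}))"
      apply (rule exI[of _ 0], rule exI[of _ 1], rule exI[of _ "\<lambda>t. t^N"], rule exI[of _ "\<lambda>t. real N * t^(N-1)"], rule exI[of _ 0])
      using pow_hyps[OF N(1)] l s N(2) by simp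
  qed
next
  show "\<forall>C < 1 / 4. \<exists>a b f f' x.
       thm21_hyps a b f f' (Inf (f' ` {a..b})) (Sup (f' ` {a..b})) \<and>
       x \<in> {a..(a + b) / 2} \<and>
       thm21_lhs a b f x > (C * (b - a) + \<bar>x - (3 * a + b) / 4\<bar>) * (Sup (f' ` {a..b}) - slope a b f)"
  proof (intro allI impI)
    fix C :: real assume "C < 1/4"
    then obtain N :: nat where N: "N \<ge> 2" "1/(real N + 1) < 1/4 - C" by (rule pickN)
    have ii: "integral {0..1::real} (\<lambda>t. -(t^N)) = -(1/(real N + 1))"
      using int_pow[of N] by simp
    have l: "thm21_lhs 0 1 (\<lambda>t. -(t^N)) 0 = 1/2 - 1/(real N + 1)"
      unfolding thm21_lhs_def ii using N by (simp add: field_simps zero_power)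
    have s: "slope 0 1 (\<lambda>t::real. -(t^N)) = -1" unfolding slope_def using N by simp
    show "\<exists>a b f f' x.
       thm21_hyps a b f f' (Inf (f' ` {a..b})) (Sup (f' ` {a..b})) \<and>
       x \<in> {a..(a + b) / 2} \<and>
       thm21_lhs a b f x > (C * (b - a) + \<bar>x - (3 * a + b) / 4\<bar>) * (Sup (f' ` {a..b}) - slope a b f)"
      apply (rule exI[of _ 0], rule exI[of _ 1], rule exI[of _ "\<lambda>t. -(t^N)"], rule exI[of _ "\<lambda>t. -(real N * t^(N-1))"], rule exI[of _ 0])
      using npow_hyps[OF N(1)] l s N(2) by simp
  qed
qed
end
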